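(* Let $f\in\mathcal H_{(d)}$ and nonzero $x,y\in\mathbb C^{n+1}$ with $\operatorname{rank}Df(x)|_{x^\perp}=n$. Then \[\|(Df(x)|_{x^\perp})^{-1}Df(x)|_{y^\perp}\|\le 1+d_P(x,y)\tan\theta_x.\]
   Context: $\mathcal H_{(d)}$: systems $f=(f_1,\dots,f_n)$ of homogeneous complex polynomials in $n+1$ variables. $x^\perp$ is the Hermitian orthogonal complement of $x$; $Df(x)|_{V}$ denotes the restriction of $Df(x):\mathbb C^{n+1}\to\mathbb C^n$ to a subspace $V$; norms are operator norms. $d_P(x,y)=\sin d_R(x,y)$ where $\cos d_R(x,y)=|\langle x,y\rangle|/(\|x\|\|y\|)$, $d_R\in[0,\pi/2]$. When $\operatorname{rank}Df(x)=n$, $\theta_x$ is the angle between the complex lines $\mathbb Cx$ and $\ker Df(x)$ (the angle $\theta\in[0,\pi/2]$ with $\cos\theta=|\langle x,w\rangle|/(\|x\|\|w\|)$ for $0\ne w\in\ker Df(x)$). *)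

theory Defs
  imports "HOL-Analysis.Analysis"
begin

definition herm_inner :: "complex^'k \<Rightarrow> complex^'k \<Rightarrow> complex" where
  "herm_inner u v = (\<Sum>i\<in>UNIV. u $ i * cnj (v $ i))"

definition hperp :: "complex^'k \<Rightarrow> (complex^'k) set" where
  "hperp x = {v. herm_inner v x = 0}"

definition homog_poly :: "nat \<Rightarrow> (complex^'k \<Rightarrow> complex) \<Rightarrow> bool" where
  "homog_poly d p \<longleftrightarrow>
     (\<exists>c :: ('k \<Rightarrow> nat) \<Rightarrow> complex.
        finite {a. c a \<noteq> 0} \<and> (\<forall>a. c a \<noteq> 0 \<longrightarrow> (\<Sum>i\<in>UNIV. a i) = d) \<and>
        p = (\<lambda>z. \<Sum>a | c a \<noteq> 0. c a * (\<Prod>i\<in>UNIV. (z $ i) ^ a i)))"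

definition H_d :: "('n \<Rightarrow> nat) \<Rightarrow> (complex^'m \<Rightarrow> complex^'n) set" where
  "H_d d = {f. \<forall>i. homog_poly (d i) (\<lambda>z. f z $ i)}"

definition rank_restr :: "(complex^'m \<Rightarrow> complex^'n) \<Rightarrow> (complex^'m) set \<Rightarrow> nat" where
  "rank_restr A V = vec.dim (A ` V)"

definition restr_inv :: "(complex^'m \<Rightarrow> complex^'n) \<Rightarrow> complex^'m \<Rightarrow> complex^'n \<Rightarrow> complex^'m" where
  "restr_inv A x w = (THE u. u \<in> hperp x \<and> A u = w)"

definition onorm_on :: "(complex^'m \<Rightarrow> complex^'k) \<Rightarrow> (complex^'m) set \<Rightarrow> real" where
  "onorm_on g V = (SUP v\<in>V. norm (g v) / norm v)"

definition dR :: "complex^'m \<Rightarrow> complex^'m \<Rightarrow> real" where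
  "dR x y = arccos (cmod (herm_inner x y) / (norm x * norm y))"

definition dP :: "complex^'m \<Rightarrow> complex^'m \<Rightarrow> real" where
  "dP x y = sin (dR x y)"

text \<open>theta_x: angle between C x and ker A (A = Df(x) of rank n), computed via a
  nonzero kernel vector.\<close>
definition theta :: "(complex^'m \<Rightarrow> complex^'n) \<Rightarrow> complex^'m \<Rightarrow> real" where
  "theta A x = (let w = (SOME w. w \<noteq> 0 \<and> A w = 0) in
                  arccos (cmod (herm_inner x w) / (norm x * norm w)))"

end

theory Submission
  imports Defs
begin


lemma vec_has_derivative:
  fixes f :: "'a::real_normed_vector \<Rightarrow> 'b::real_normed_vector^'n"
  assumes "\<And>i. ((\<lambda>z. f z $ i) has_derivative D i) (at x)"
  shows "(f has_derivative (\<lambda>h. \<chi> i. D i h)) (at x)"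
proof -
  have bl: "\<And>i. bounded_linear (D i)" using assms has_derivative_bounded_linear by blast
  have lin: "bounded_linear (\<lambda>h. \<chi> i. D i h)"
  proof
    show "(\<chi> i. D i (b1 + b2)) = (\<chi> i. D i b1) + (\<chi> i. D i b2)" for b1 b2
      using bl by (simp add: vec_eq_iff linear_add bounded_linear.linear)
    show "(\<chi> i. D i (r *\<^sub>R b)) = r *\<^sub>R (\<chi> i. D i b)" for r b
      using bl by (simp add: vec_eq_iff linear_scale bounded_linear.linear linear_scaleR)
    have "\<forall>i. \<exists>K>0. \<forall>h. norm (D i h) \<le> norm h * K"
      using bl bounded_linear.pos_bounded by blast
    then obtain K where K: "\<And>i h. norm (D i h) \<le> norm h * K i" "\<And>i. K i > 0"
      by metis
    show "\<exists>K. \<forall>h. norm (\<chi> i. D i h) \<le> norm h * K"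
    proof (intro exI allI)
      fix h
      have "norm (\<chi> i. D i h) \<le> (\<Sum>i\<in>UNIV. norm ((\<chi> i. D i h) $ i))" unfolding norm_vec_def by (rule L2_set_le_sum) simp
      also have "\<dots> \<le> (\<Sum>i\<in>UNIV. norm h * K i)" by (intro sum_mono) (simp add: K)
      finally show "norm (\<chi> i. D i h) \<le> norm h * (\<Sum>i\<in>UNIV. K i)" by (simp add: sum_distrib_left)
    qed
  qed
  have t: "\<And>i. ((\<lambda>y. ((f y $ i - f x $ i) - D i (y - x)) /\<^sub>R norm (y - x)) \<longlongrightarrow> 0) (at x)"
    using assms by (simp add: has_derivative_at_within)
  have "((\<lambda>y. \<chi> i. ((f y $ i - f x $ i) - D i (y - x)) /\<^sub>R norm (y - x)) \<longlongrightarrow> (\<chi> i. 0)) (at x)"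
    by (rule tendsto_vec_lambda) (rule t)
  moreover have "(\<lambda>y. \<chi> i. ((f y $ i - f x $ i) - D i (y - x)) /\<^sub>R norm (y - x)) =
     (\<lambda>y. ((f y - f x) - (\<chi> i. D i (y - x))) /\<^sub>R norm (y - x))"
    by (rule ext) (simp add: vec_eq_iff)
  ultimately show ?thesis using lin
    by (simp add: has_derivative_at_within zero_vec_def)
qed

definition chd :: "(complex^'m \<Rightarrow> complex) \<Rightarrow> complex^'m \<Rightarrow> bool" where
  "chd g x \<longleftrightarrow> (\<exists>D. (g has_derivative D) (at x) \<and> (\<forall>c h. D (c *s h) = c * D h))"

lemma chd_const: "chd (\<lambda>z. c) x"
  unfolding chd_def by (rule exI[of _ "\<lambda>h. 0"]) simp

lemma chd_coord: "chd (\<lambda>z. z $ i) x"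
  unfolding chd_def
  by (rule exI[of _ "\<lambda>h. h $ i"]) (simp add: bounded_linear_imp_has_derivative bounded_linear_vec_nth)

lemma chd_add: "chd f x \<Longrightarrow> chd g x \<Longrightarrow> chd (\<lambda>z. f z + g z) x"
  unfolding chd_def
proof (elim exE conjE)
  fix F G assume f: "(f has_derivative F) (at x)" "\<forall>c h. F (c *s h) = c * F h"
    and g: "(g has_derivative G) (at x)" "\<forall>c h. G (c *s h) = c * G h"
  show "\<exists>D. ((\<lambda>z. f z + g z) has_derivative D) (at x) \<and> (\<forall>c h. D (c *s h) = c * D h)"
    by (rule exI[of _ "\<lambda>h. F h + G h"]) (simp add: f g has_derivative_add algebra_simps)
qed

lemma chd_mult: "chd f x \<Longrightarrow> chd g x \<Longrightarrow> chd (\<lambda>z. f z * g z) x"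
  unfolding chd_def
proof (elim exE conjE)
  fix F G assume f: "(f has_derivative F) (at x)" "\<forall>c h. F (c *s h) = c * F h"
    and g: "(g has_derivative G) (at x)" "\<forall>c h. G (c *s h) = c * G h"
  show "\<exists>D. ((\<lambda>z. f z * g z) has_derivative D) (at x) \<and> (\<forall>c h. D (c *s h) = c * D h)"
  proof (rule exI[of _ "\<lambda>h. f x * G h + F h * g x"], intro conjI allI)
    show "((\<lambda>z. f z * g z) has_derivative (\<lambda>h. f x * G h + F h * g x)) (at x)"
      by (rule has_derivative_mult[OF f(1) g(1)])
    show "f x * G (c *s h) + F (c *s h) * g x = c * (f x * G h + F h * g x)" for c h
      by (simp add: f g algebra_simps)
  qed
qed

lemma chd_power: "chd f x \<Longrightarrow> chd (\<lambda>z. f z ^ n) x"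
  by (induction n) (simp_all add: chd_const chd_mult)

lemma chd_prod: "finite A \<Longrightarrow> (\<And>a. a \<in> A \<Longrightarrow> chd (f a) x) \<Longrightarrow> chd (\<lambda>z. \<Prod>a\<in>A. f a z) x"
  by (induction A rule: finite_induct) (simp_all add: chd_const chd_mult)

lemma chd_sum: "finite A \<Longrightarrow> (\<And>a. a \<in> A \<Longrightarrow> chd (f a) x) \<Longrightarrow> chd (\<lambda>z. \<Sum>a\<in>A. f a z) x"
  by (induction A rule: finite_induct) (simp_all add: chd_const chd_add)

lemma chd_homog: "homog_poly d p \<Longrightarrow> chd p x"
proof -
  assume "homog_poly d p"
  then obtain c where c: "finite {a. c a \<noteq> 0}"
    "p = (\<lambda>z. \<Sum>a | c a \<noteq> 0. c a * (\<Prod>i\<in>UNIV. (z $ i) ^ a i))"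
    unfolding homog_poly_def by blast
  show ?thesis unfolding c(2)
    by (rule chd_sum[OF c(1)], rule chd_mult[OF chd_const], rule chd_prod, simp,
        rule chd_power, rule chd_coord)
qed

lemma deriv_clinear:
  fixes f :: "complex^'m \<Rightarrow> complex^'n"
  assumes "f \<in> H_d d"
  shows "(f has_derivative frechet_derivative f (at x)) (at x)"
    "\<And>c h. frechet_derivative f (at x) (c *s h) = c *s frechet_derivative f (at x) h"
proof -
  have "\<forall>i. chd (\<lambda>z. f z $ i) x" using assms chd_homog unfolding H_d_def by blast
  then have "\<forall>i. \<exists>D. ((\<lambda>z. f z $ i) has_derivative D) (at x) \<and> (\<forall>c h. D (c *s h) = c * D h)"
    unfolding chd_def by blast
  then obtain D where D: "\<And>i. ((\<lambda>z. f z $ i) has_derivative D i) (at x)"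
     "\<And>i c h. D i (c *s h) = c * D i h" by metis
  have fd: "(f has_derivative (\<lambda>h. \<chi> i. D i h)) (at x)" by (rule vec_has_derivative) (rule D)
  then have eq: "frechet_derivative f (at x) = (\<lambda>h. \<chi> i. D i h)" by (metis frechet_derivative_at)
  show "(f has_derivative frechet_derivative f (at x)) (at x)" using fd eq by simp
  show "frechet_derivative f (at x) (c *s h) = c *s frechet_derivative f (at x) h" for c h
    by (simp add: eq D vec_eq_iff)
qed




lemma hi_add_left: "herm_inner (u + v) w = herm_inner u w + herm_inner v w"
  by (simp add: herm_inner_def distrib_right sum.distrib)
lemma hi_diff_left: "herm_inner (u - v) w = herm_inner u w - herm_inner v w"
  by (simp add: herm_inner_def left_diff_distrib sum_subtractf)
lemma hi_scale_left: "herm_inner (c *s u) w = c * herm_inner u w"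
  by (simp add: herm_inner_def sum_distrib_left mult.assoc)
lemma hi_add_right: "herm_inner u (v + w) = herm_inner u v + herm_inner u w"
  by (simp add: herm_inner_def distrib_left sum.distrib)
lemma hi_diff_right: "herm_inner u (v - w) = herm_inner u v - herm_inner u w"
  by (simp add: herm_inner_def right_diff_distrib sum_subtractf)
lemma hi_scale_right: "herm_inner u (c *s w) = cnj c * herm_inner u w"
  by (simp add: herm_inner_def sum_distrib_left algebra_simps)
lemma hi_cnj: "cnj (herm_inner u v) = herm_inner v u"
  by (simp add: herm_inner_def mult.commute)
lemma hi_zero_left[simp]: "herm_inner 0 u = 0"
  by (simp add: herm_inner_def)
lemma hi_zero_right[simp]: "herm_inner u 0 = 0"
  by (simp add: herm_inner_def)

lemma norm_sq_vec: "(norm (u::complex^'k))^2 = (\<Sum>i\<in>UNIV. (cmod (u $ i))^2)"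
  unfolding norm_vec_def L2_set_def by (simp add: sum_nonneg)

lemma hi_self: "herm_inner u u = complex_of_real ((norm u)^2)"
  unfolding norm_sq_vec herm_inner_def of_real_sum complex_norm_square by simp

lemma Re_hi: "Re (herm_inner u v) = inner u v"
  unfolding herm_inner_def inner_vec_def Re_sum
  by (intro sum.cong refl) (simp add: inner_complex_def)

lemma cnj_mult_self: "cnj c * c = complex_of_real ((cmod c)^2)"
  by (metis complex_norm_square mult.commute)

lemma hi_cs: "cmod (herm_inner u v) \<le> norm u * norm v"
proof (cases "herm_inner u v = 0")
  case True then show ?thesis by simp
next
  case False
  define c where "c = cnj (cmod (herm_inner u v) / herm_inner u v)"
  have cm: "cmod c = 1" using False by (simp add: c_def norm_divide)
  have "cnj c * herm_inner u v = of_real (cmod (herm_inner u v))"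
    using False by (simp add: c_def)
  then have "cmod (herm_inner u v) = Re (herm_inner u (c *s v))"
    by (simp add: hi_scale_right)
  also have "\<dots> = inner u (c *s v)" by (rule Re_hi)
  also have "\<dots> \<le> norm u * norm (c *s v)" by (rule norm_cauchy_schwarz)
  also have "norm (c *s v) = norm v"
  proof -
    have "complex_of_real ((norm (c *s v))^2) = complex_of_real ((norm v)^2)"
      unfolding hi_self[symmetric] hi_scale_left hi_scale_right
      using cm by (simp add: mult.assoc[symmetric] cnj_mult_self)
    then have "(norm (c *s v))^2 = (norm v)^2" using of_real_eq_iff by blast
    then show ?thesis by (simp add: power2_eq_iff_nonneg)
  qed
  finally show ?thesis .
qed

lemma norm_scale_vec: "norm (c *s (v::complex^'k)) = cmod c * norm v"
proof -
  have "complex_of_real ((norm (c *s v))^2) = complex_of_real ((cmod c * norm v)^2)"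
    unfolding hi_self[symmetric] hi_scale_left hi_scale_right
    by (simp add: hi_self power_mult_distrib mult.assoc[symmetric] cnj_mult_self)
  then have "(norm (c *s v))^2 = (cmod c * norm v)^2" using of_real_eq_iff by blast
  then show ?thesis by (simp add: power2_eq_iff_nonneg)
qed

lemma proj_orth:
  assumes "z \<noteq> 0"
  shows "herm_inner (u - (herm_inner u z / complex_of_real ((norm z)^2)) *s z) z = 0"
  using assms by (simp add: hi_diff_left hi_scale_left hi_self)

lemma proj_norm:
  assumes "z \<noteq> 0"
  shows "(norm (u - (herm_inner u z / complex_of_real ((norm z)^2)) *s z))^2
       = (norm u)^2 - (cmod (herm_inner u z))^2 / (norm z)^2"
proof -
  define t where "t = herm_inner u z / complex_of_real ((norm z)^2)"
  define p where "p = u - t *s z"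
  have o: "herm_inner p z = 0" using proj_orth[OF assms] by (simp add: p_def t_def)
  have "herm_inner p p = herm_inner p u - cnj t * herm_inner p z"
    by (simp add: p_def hi_diff_right hi_scale_right)
  also have "\<dots> = herm_inner p u" using o by simp
  also have "\<dots> = herm_inner u u - t * herm_inner z u"
    by (simp add: p_def hi_diff_left hi_scale_left)
  also have "t * herm_inner z u = complex_of_real ((cmod (herm_inner u z))^2 / (norm z)^2)"
  proof -
    have "t * herm_inner z u = (herm_inner u z * cnj (herm_inner u z)) / complex_of_real ((norm z)^2)"
      unfolding t_def hi_cnj by simp
    also have "\<dots> = complex_of_real ((cmod (herm_inner u z))^2) / complex_of_real ((norm z)^2)"
      by (simp only: complex_norm_square)
    finally show ?thesis by simp
  qed
  finally have "complex_of_real ((norm p)^2) = complex_of_real ((norm u)^2 - (cmod (herm_inner u z))^2 / (norm z)^2)"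
    by (simp add: hi_self)
  then show ?thesis using of_real_eq_iff unfolding p_def t_def by blast
qed




lemma hperp_subspace: "vec.subspace (hperp x)"
  unfolding vec.subspace_def hperp_def by (simp add: hi_add_left hi_scale_left hi_zero_left)

lemma kernel_exists:
  fixes A :: "complex^'m \<Rightarrow> complex^'n"
  assumes lin: "Vector_Spaces.linear (*s) (*s) A"
    and card: "CARD('m) = CARD('n) + 1"
  shows "\<exists>w. w \<noteq> 0 \<and> A w = 0"
proof (rule ccontr)
  assume "\<not> ?thesis"
  then have nz: "\<And>w. A w = 0 \<Longrightarrow> w = 0" by blast
  have "inj_on A (vec.span UNIV)"
    by (rule inj_onI) (metis nz vec.linear_diff[OF lin] eq_iff_diff_eq_0)
  then have "vec.dim (A ` UNIV) = vec.dim (UNIV :: (complex^'m) set)"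
    by (rule vec.dim_image_eq[OF lin])
  then have "CARD('m) \<le> CARD('n)"
    using dim_subset_UNIV_cart_gen[of "A ` UNIV"] vec_dim_card by metis
  then show False using card by simp
qed

lemma dim_hperp:
  fixes x :: "complex^'m"
  assumes "x \<noteq> 0"
  shows "vec.dim (hperp x) + 1 \<le> CARD('m)"
proof -
  have "x \<notin> hperp x" using assms by (simp add: hperp_def hi_self)
  then have "x \<notin> vec.span (hperp x)" using vec.span_eq_iff hperp_subspace by blast
  then have "vec.dim (insert x (hperp x)) = vec.dim (hperp x) + 1" by (simp add: vec.dim_insert)
  then show ?thesis using dim_subset_UNIV_cart_gen[of "insert x (hperp x)"] by simp
qed

lemma inj_hperp:
  fixes A :: "complex^'m \<Rightarrow> complex^'n"
  assumes lin: "Vector_Spaces.linear (*s) (*s) A"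
    and card: "CARD('m) = CARD('n) + 1" and x: "x \<noteq> 0"
    and rk: "rank_restr A (hperp x) = CARD('n)"
    and u: "u \<in> hperp x" "A u = 0"
  shows "u = 0"
proof (rule ccontr)
  assume u0: "u \<noteq> 0"
  have "{u} \<subseteq> hperp x" "vec.independent {u}" using u u0 by auto
  then obtain B where B: "{u} \<subseteq> B" "B \<subseteq> hperp x" "vec.independent B" "hperp x \<subseteq> vec.span B"
    by (rule vec.maximal_independent_subset_extend)
  have fin: "finite B" using B(3) vec.independent_bound_general by blast
  have cB: "card B = vec.dim (hperp x)" by (rule vec.basis_card_eq_dim[OF B(2) B(4) B(3)])
  have "A ` hperp x \<subseteq> A ` vec.span B" using B(4) by blast
  also have "\<dots> = vec.span (A ` B)" by (simp add: vec.linear_span_image[OF lin])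
  also have "A ` B \<subseteq> insert 0 (A ` (B - {u}))" using u by blast
  then have "vec.span (A ` B) \<subseteq> vec.span (A ` (B - {u}))"
    by (metis vec.span_insert_0 vec.span_mono)
  finally have "vec.dim (A ` hperp x) \<le> card (A ` (B - {u}))"
    using fin by (intro vec.dim_le_card) auto
  also have "\<dots> \<le> card (B - {u})" using fin by (intro card_image_le) auto
  also have "\<dots> = card B - 1" using B(1) fin by simp
  finally have le: "vec.dim (A ` hperp x) \<le> card B - 1" .
  have "card B \<noteq> 0" using B(1) fin by auto
  with le have "vec.dim (A ` hperp x) + 1 \<le> card B" by linarith
  then have "CARD('n) + 1 \<le> vec.dim (hperp x)" using rk cB unfolding rank_restr_def by simp
  then show False using dim_hperp[OF x] card by simp
qed




lemma sqrt_factor: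
  fixes n a b :: real
  assumes "n \<ge> 0" "a \<ge> 0" "n^2 = a^2 * b"
  shows "n = a * sqrt b"
proof -
  have "sqrt (n^2) = sqrt (a^2) * sqrt b" using assms(3) by (simp add: real_sqrt_mult)
  then show ?thesis using assms(1,2) by simp
qed

lemma proj_norm_eq:
  fixes u z :: "complex^'k"
  assumes "z \<noteq> 0" "u \<noteq> 0"
  shows "norm (u - (herm_inner u z / complex_of_real ((norm z)^2)) *s z)
     = norm u * sqrt (1 - (cmod (herm_inner u z) / (norm u * norm z))^2)"
proof (rule sqrt_factor)
  show "(norm (u - (herm_inner u z / complex_of_real ((norm z)^2)) *s z))^2
     = (norm u)^2 * (1 - (cmod (herm_inner u z) / (norm u * norm z))^2)"
    unfolding proj_norm[OF assms(1)] using assms by (simp add: field_simps power_mult_distrib)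
qed auto

lemma main_bound:
  fixes A :: "complex^'m \<Rightarrow> complex^'n"
  assumes lin: "Vector_Spaces.linear (*s) (*s) A"
    and card: "CARD('m) = CARD('n) + 1" and x: "x \<noteq> 0" and y: "y \<noteq> 0"
    and rk: "rank_restr A (hperp x) = CARD('n)"
  shows "onorm_on (\<lambda>v. restr_inv A x (A v)) (hperp y) \<le> 1 + dP x y * tan (theta A x)"
proof -
  define w where "w = (SOME w. w \<noteq> 0 \<and> A w = 0)"
  have w: "w \<noteq> 0" "A w = 0"
    using someI_ex[OF kernel_exists[OF lin card]] unfolding w_def by auto
  have inj: "\<And>u. u \<in> hperp x \<Longrightarrow> A u = 0 \<Longrightarrow> u = 0"
    using inj_hperp[OF lin card x rk] by blast
  have wx: "herm_inner w x \<noteq> 0" using inj[of w] w by (auto simp: hperp_def)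
  have nx: "norm x > 0" and nw: "norm w > 0" and ny: "norm y > 0" using x w y by auto
  define c where "c = cmod (herm_inner x w) / (norm x * norm w)"
  have cxw: "cmod (herm_inner x w) = cmod (herm_inner w x)"
    by (metis complex_mod_cnj hi_cnj)
  have c_pos: "c > 0" using wx nx nw cxw by (simp add: c_def)
  have c_le: "c \<le> 1" using hi_cs[of x w] nx nw by (simp add: c_def divide_le_eq_1)
  have th: "theta A x = arccos c" unfolding theta_def c_def w_def[symmetric] by simp
  define T where "T = sqrt (1 - c^2) / c"
  have tanT: "tan (theta A x) = T"
    using c_pos c_le by (simp add: th tan_def cos_arccos sin_arccos_abs T_def)
  have T0: "T \<ge> 0" using c_pos c_le by (simp add: T_def abs_square_le_1)
  define e where "e = cmod (herm_inner x y) / (norm x * norm y)"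
  have e0: "e \<ge> 0" and e1: "e \<le> 1" using hi_cs[of x y] nx ny by (simp_all add: e_def divide_le_eq_1)
  define S where "S = sqrt (1 - e^2)"
  have dPS: "dP x y = S" using e0 e1 by (simp add: dP_def dR_def e_def[symmetric] sin_arccos_abs S_def)
  have S0: "S \<ge> 0" using e0 e1 by (simp add: S_def abs_square_le_1)
  have bound: "norm (restr_inv A x (A v)) \<le> norm v * (1 + S * T)" if v: "v \<in> hperp y" for v
  proof -
    define l where "l = herm_inner v x / herm_inner w x"
    define u0 where "u0 = v - l *s w"
    have u0x: "u0 \<in> hperp x" using wx by (simp add: hperp_def u0_def l_def hi_diff_left hi_scale_left)
    have Au0: "A u0 = A v"
      by (simp add: u0_def vec.linear_diff[OF lin] vec.linear_scale[OF lin] w)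
    have ri: "restr_inv A x (A v) = u0"
      unfolding restr_inv_def
    proof (rule the_equality)
      show "u0 \<in> hperp x \<and> A u0 = A v" using u0x Au0 by simp
      fix u assume u: "u \<in> hperp x \<and> A u = A v"
      have "u - u0 \<in> hperp x" using u u0x by (simp add: hperp_def hi_diff_left)
      moreover have "A (u - u0) = 0" using u Au0 by (simp add: vec.linear_diff[OF lin])
      ultimately show "u = u0" using inj by fastforce
    qed
    define px where "px = herm_inner v x / complex_of_real ((norm x)^2)"
    define pw where "pw = herm_inner w x / complex_of_real ((norm x)^2)"
    have lpw: "l * pw = px" using wx by (simp add: l_def pw_def px_def)
    have u0eq: "u0 = (v - px *s x) - l *s (w - pw *s x)"
      unfolding u0_def vec_eq_iff using lpw[symmetric] by (simp add: algebra_simps)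
    have "norm u0 \<le> norm (v - px *s x) + cmod l * norm (w - pw *s x)"
      unfolding u0eq by (metis norm_scale_vec norm_triangle_ineq4)
    also have "norm (v - px *s x) \<le> norm v"
    proof -
      have "(norm (v - px *s x))^2 \<le> (norm v)^2"
        unfolding px_def proj_norm[OF x] by simp
      then show ?thesis by (rule power2_le_imp_le) simp
    qed
    also have "norm (w - pw *s x) = norm w * sqrt (1 - c^2)"
      unfolding pw_def proj_norm_eq[OF x w(1)] c_def cxw by (simp add: mult.commute)
    also have "cmod l * (norm w * sqrt (1 - c^2)) = cmod (herm_inner v x) / norm x * T"
      using nx nw wx c_pos by (simp add: l_def norm_divide T_def c_def cxw field_simps)
    also have "cmod (herm_inner v x) \<le> norm v * (norm x * S)"
    proof -
      define Q where "Q = x - (herm_inner x y / complex_of_real ((norm y)^2)) *s y"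
      have vy: "herm_inner v y = 0" using v by (simp add: hperp_def)
      have "herm_inner v Q = herm_inner v x" by (simp add: Q_def hi_diff_right hi_scale_right vy)
      moreover have "norm Q = norm x * S"
        unfolding Q_def proj_norm_eq[OF y x] S_def e_def ..
      ultimately show ?thesis using hi_cs[of v Q] by simp
    qed
    then have "cmod (herm_inner v x) / norm x * T \<le> norm v * (norm x * S) / norm x * T"
      using nx T0 by (intro mult_right_mono divide_right_mono) auto
    finally show ?thesis using ri nx by (simp add: field_simps)
  qed
  show ?thesis unfolding onorm_on_def dPS tanT
  proof (rule cSUP_least)
    show "hperp y \<noteq> {}" by (auto simp: hperp_def intro!: exI[of _ 0])
    fix v assume v: "v \<in> hperp y"
    show "norm (restr_inv A x (A v)) / norm v \<le> 1 + S * T"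
    proof (cases "v = 0")
      case True then show ?thesis using S0 T0 by simp
    next
      case False
      then show ?thesis using bound[OF v] by (simp add: pos_divide_le_eq mult.commute)
    qed
  qed
qed


theorem lemma4:
  fixes f :: "complex^'m \<Rightarrow> complex^'n" and d :: "'n \<Rightarrow> nat"
    and x y :: "complex^'m"
  assumes "CARD('m) = CARD('n) + 1"
    and "f \<in> H_d d"
    and "x \<noteq> 0" and "y \<noteq> 0"
    and "rank_restr (frechet_derivative f (at x)) (hperp x) = CARD('n)"
  shows "onorm_on (\<lambda>v. restr_inv (frechet_derivative f (at x)) x
                          (frechet_derivative f (at x) v)) (hperp y)
         \<le> 1 + dP x y * tan (theta (frechet_derivative f (at x)) x)"
proof (rule main_bound[OF _ assms(1) assms(3) assms(4) assms(5)])
  have bl: "bounded_linear (frechet_derivative f (at x))"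
    using deriv_clinear(1)[OF assms(2)] has_derivative_bounded_linear by blast
  show "Vector_Spaces.linear (*s) (*s) (frechet_derivative f (at x))"
    unfolding Vector_Spaces.linear_iff
    using deriv_clinear(2)[OF assms(2)] linear_add[OF bounded_linear.linear[OF bl]]
    by (auto simp: vec.vector_space_axioms)
qed

end
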